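(* Let $f_i$ and $f_j$ be Poisson finite set densities on finite subsets of $\mathbb{R}^d$ with parameters (expected numbers of objects) $\lambda_i,\lambda_j>0$ and localisation densities $\rho_i,\rho_j$ on $\mathbb{R}^d$, and let $\omega\in[0,1]$. Let $z_\omega=\int_{\mathbb{R}^d}\rho_i^{(1-\omega)}(x)\rho_j^{\omega}(x)\,\mathrm{d}x$ and let $\lambda_\omega=\lambda_i^{(1-\omega)}\lambda_j^{\omega}z_\omega$ be the expected number of objects of their exponential mixture density with weight $\omega$. Then $$\lambda_\omega<\min\{\lambda_i,\lambda_j\}$$ holds whenever $$z_\omega<\frac{\min\{\lambda_i,\lambda_j\}}{\max\{\lambda_i,\lambda_j\}}.$$
   Context: A Poisson finite set density with parameter $\lambda>0$ and localisation (probability) density $\rho$ on $\mathbb{R}^d$ has Poisson cardinality distribution with mean $\lambda$ and, given cardinality $n$, localisation density $\rho_n(x_1,\ldots,x_n)=\prod_{k=1}^n\rho(x_k)$. The exponential mixture density with weight $\omega$ is $f_\omega\propto f_i^{1-\omega}f_j^{\omega}$, normalised with respect to the set integral; it is Poisson with parameter $\lambda_\omega$ as in the claim. *)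

theory Defs
  imports "HOL-Analysis.Analysis"
begin

text \<open>Real power of a nonnegative base with the convention b^0 = 1 (also for b = 0),
  as needed for the integrand rho_i^(1-omega) rho_j^omega at omega in {0,1}.
  (Isabelle's powr has 0 powr 0 = 0.)\<close>
definition rpow :: "real \<Rightarrow> real \<Rightarrow> real" where
  "rpow b e = (if e = 0 then 1 else b powr e)"

definition is_density :: "('a::euclidean_space \<Rightarrow> real) \<Rightarrow> bool" where
  "is_density \<rho> \<longleftrightarrow> \<rho> \<in> borel_measurable lborel \<and> (\<forall>x. 0 \<le> \<rho> x)
     \<and> integrable lborel \<rho> \<and> (LINT x|lborel. \<rho> x) = 1"

definition z_mix :: "('a::euclidean_space \<Rightarrow> real) \<Rightarrow> ('a \<Rightarrow> real) \<Rightarrow> real \<Rightarrow> real" where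
  "z_mix \<rho>i \<rho>j \<omega> = (LINT x|lborel. rpow (\<rho>i x) (1 - \<omega>) * rpow (\<rho>j x) \<omega>)"

definition lambda_mix :: "real \<Rightarrow> real \<Rightarrow> ('a::euclidean_space \<Rightarrow> real) \<Rightarrow> ('a \<Rightarrow> real) \<Rightarrow> real \<Rightarrow> real" where
  "lambda_mix li lj \<rho>i \<rho>j \<omega> = li powr (1 - \<omega>) * lj powr \<omega> * z_mix \<rho>i \<rho>j \<omega>"

end

theory Submission
  imports Defs
begin

theorem proposition2:
  fixes \<rho>i \<rho>j :: "'a::euclidean_space \<Rightarrow> real" and li lj \<omega> :: real
  assumes "li > 0" and "lj > 0"
    and "is_density \<rho>i" and "is_density \<rho>j"
    and "0 \<le> \<omega>" and "\<omega> \<le> 1"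
    and "z_mix \<rho>i \<rho>j \<omega> < min li lj / max li lj"
  shows "lambda_mix li lj \<rho>i \<rho>j \<omega> < min li lj"
proof -
  define M where "M = max li lj"
  define m where "m = min li lj"
  define z where "z = z_mix \<rho>i \<rho>j \<omega>"
  define P where "P = li powr (1 - \<omega>) * lj powr \<omega>"
  have Mpos: "M > 0" "m > 0" using assms(1,2) by (auto simp: M_def m_def)
  have a: "li powr (1 - \<omega>) \<le> M powr (1 - \<omega>)"
    by (rule powr_mono2) (use assms in \<open>auto simp: M_def\<close>)
  have b: "lj powr \<omega> \<le> M powr \<omega>"
    by (rule powr_mono2) (use assms in \<open>auto simp: M_def\<close>)
  have "P \<le> M powr (1 - \<omega>) * M powr \<omega>"
    unfolding P_def by (rule mult_mono[OF a b]) auto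
  also have "\<dots> = M" using Mpos by (simp add: powr_add[symmetric])
  finally have PM: "P \<le> M" .
  have Ppos: "P > 0" using assms(1,2) by (simp add: P_def)
  have zlt: "z * M < m" using assms(7) Mpos by (simp add: z_def M_def m_def pos_less_divide_eq)
  have "P * z < m"
  proof (cases "z \<ge> 0")
    case True
    have "P * z \<le> M * z" using PM True by (simp add: mult_right_mono)
    thus ?thesis using zlt by (simp add: mult.commute)
  next
    case False
    hence "P * z < 0" using Ppos by (simp add: mult_pos_neg)
    thus ?thesis using Mpos by simp
  qed
  thus ?thesis by (simp add: lambda_mix_def P_def z_def m_def)
qed

end
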